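(* Let $\mathcal A\subset\mathbb{R}^d$ be finite, $\lambda\in\mathbb{R}^{\mathcal A}$ and $w\in\mathbb{R}^{\mathcal A}_>$. Then the family $\lambda(t).X_{\mathcal A,w}$ has a limit as $t\to\infty$ in the Hausdorff topology on closed subsets of $\Delta^{\mathcal A}$, and $\lim_{t\to\infty}\lambda(t).X_{\mathcal A,w}=X(\mathcal S_\lambda,w)$, where $\mathcal S_\lambda$ is the regular subdivision of $\mathcal A$ induced by $\lambda$.
   Context: $\Delta^{\mathcal A}=\{z\in\mathbb{R}_{\ge0}^{\mathcal A}\mid\sum_{\mathbf a}z_{\mathbf a}=1\}$ with homogeneous coordinates and the $\ell_1$ metric $d(y,z)=\sum_{\mathbf a}|y_{\mathbf a}-z_{\mathbf a}|$; the Hausdorff distance between closed sets $X,Y$ is $\max\{\sup_{x\in X}\inf_{y\in Y}d(x,y),\sup_{y\in Y}\inf_{x\in X}d(x,y)\}$. For $\mathcal F\subset\mathcal A$, $\Delta^{\mathcal F}\subset\Delta^{\mathcal A}$ is the face with $z_{\mathbf a}=0$ for $\mathbf a\notin\mathcal F$. For $x\in\mathbb{R}^d_>$, $x^{\mathbf a}=\prod_j\exp(\mathbf a_j\log x_j)$. For $w\in\mathbb{R}^{\mathcal A}_>$, $X_{\mathcal F,w}$ is the closure in $\Delta^{\mathcal F}$ of $\{[w_{\mathbf f}x^{\mathbf f}\mid\mathbf f\in\mathcal F]\mid x\in\mathbb{R}^d_>\}$ (a real irrational toric variety, translated by $w$); $X_{\mathcal A,w}$ is the case $\mathcal F=\mathcal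 A$. The torus acts by $u.z=[u_{\mathbf a}z_{\mathbf a}]$. For $\lambda\in\mathbb{R}^{\mathcal A}$, $\lambda(t)\in\mathbb{R}^{\mathcal A}_>$ has coordinates $\lambda(t)_{\mathbf a}=\exp(t\lambda(\mathbf a))$. Regular subdivision: let $P_\lambda=\mathrm{conv}\{(\mathbf a,\lambda(\mathbf a))\}\subset\mathbb{R}^{d+1}$; upper faces are faces with an outward normal having positive last coordinate; $\mathcal S_\lambda$ is the collection of sets $\{\mathbf a\in\mathcal A\mid(\mathbf a,\lambda(\mathbf a))\in F\}$ for $F$ an upper face (the faces of $\mathcal S_\lambda$). For a subdivision $\mathcal S$, $X(\mathcal S,w):=\bigcup_{\mathcal F\text{ a face of }\mathcal S}X_{\mathcal F,w}$. *)

theory Defs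
  imports "HOL-Analysis.Analysis"
begin

text \<open>Points of \<open>\<Delta>^A\<close> are functions \<open>'a \<Rightarrow> real\<close> vanishing outside \<open>A\<close>
  (homogeneous coordinates are normalised to sum 1).\<close>

definition simplex_face :: "'a set \<Rightarrow> 'a set \<Rightarrow> ('a \<Rightarrow> real) set" where
  "simplex_face A F = {z. (\<forall>a. a \<notin> A \<longrightarrow> z a = 0) \<and> (\<forall>a\<in>A. 0 \<le> z a)
      \<and> (\<Sum>a\<in>A. z a) = 1 \<and> (\<forall>a\<in>A. a \<notin> F \<longrightarrow> z a = 0)}"

abbreviation std_simplex :: "'a set \<Rightarrow> ('a \<Rightarrow> real) set" where
  "std_simplex A \<equiv> simplex_face A A"

definition l1dist :: "'a set \<Rightarrow> ('a \<Rightarrow> real) \<Rightarrow> ('a \<Rightarrow> real) \<Rightarrow> real" where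
  "l1dist A y z = (\<Sum>a\<in>A. \<bar>y a - z a\<bar>)"

definition hausdorff_l1 :: "'a set \<Rightarrow> ('a \<Rightarrow> real) set \<Rightarrow> ('a \<Rightarrow> real) set \<Rightarrow> real" where
  "hausdorff_l1 A X Y = max (SUP x\<in>X. INF y\<in>Y. l1dist A x y) (SUP y\<in>Y. INF x\<in>X. l1dist A x y)"

definition closure_in_face :: "'a set \<Rightarrow> 'a set \<Rightarrow> ('a \<Rightarrow> real) set \<Rightarrow> ('a \<Rightarrow> real) set" where
  "closure_in_face A F S = {z \<in> simplex_face A F. \<forall>e>0. \<exists>y\<in>S. l1dist A z y < e}"

definition monomial_pos :: "real^'d \<Rightarrow> real^'d \<Rightarrow> real" where
  "monomial_pos x a = (\<Prod>j\<in>UNIV. exp (a $ j * ln (x $ j)))"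

definition pos_orthant :: "(real^'d) set" where
  "pos_orthant = {x. \<forall>j. 0 < x $ j}"

definition toric_point :: "(real^'d) set \<Rightarrow> (real^'d \<Rightarrow> real) \<Rightarrow> real^'d \<Rightarrow> (real^'d \<Rightarrow> real)" where
  "toric_point F w x = (\<lambda>a. if a \<in> F then w a * monomial_pos x a / (\<Sum>b\<in>F. w b * monomial_pos x b) else 0)"

definition toric_var :: "(real^'d) set \<Rightarrow> (real^'d) set \<Rightarrow> (real^'d \<Rightarrow> real) \<Rightarrow> (real^'d \<Rightarrow> real) set" where
  "toric_var A F w = closure_in_face A F (toric_point F w ` pos_orthant)"

definition torus_act :: "'a set \<Rightarrow> ('a \<Rightarrow> real) \<Rightarrow> ('a \<Rightarrow> real) \<Rightarrow> ('a \<Rightarrow> real)" where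
  "torus_act A u z = (\<lambda>a. if a \<in> A then u a * z a / (\<Sum>b\<in>A. u b * z b) else 0)"

definition one_param :: "('a \<Rightarrow> real) \<Rightarrow> real \<Rightarrow> ('a \<Rightarrow> real)" where
  "one_param lam t = (\<lambda>a. exp (t * lam a))"

definition lifted_polytope :: "(real^'d) set \<Rightarrow> (real^'d \<Rightarrow> real) \<Rightarrow> ((real^'d) \<times> real) set" where
  "lifted_polytope A lam = convex hull ((\<lambda>a. (a, lam a)) ` A)"

definition upper_face :: "((real^'d) \<times> real) set \<Rightarrow> ((real^'d) \<times> real) set \<Rightarrow> bool" where
  "upper_face P F \<longleftrightarrow> F face_of P \<and>
     (\<exists>c::(real^'d) \<times> real. snd c > 0 \<and> F = {p \<in> P. \<forall>q\<in>P. c \<bullet> q \<le> c \<bullet> p})"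

definition reg_subdiv :: "(real^'d) set \<Rightarrow> (real^'d \<Rightarrow> real) \<Rightarrow> (real^'d) set set" where
  "reg_subdiv A lam = {{a \<in> A. (a, lam a) \<in> F} | F. upper_face (lifted_polytope A lam) F}"

definition subdiv_var :: "(real^'d) set \<Rightarrow> (real^'d) set set \<Rightarrow> (real^'d \<Rightarrow> real) \<Rightarrow> (real^'d \<Rightarrow> real) set" where
  "subdiv_var A S w = (\<Union>F\<in>S. toric_var A F w)"

end

theory Submission
  imports Defs
begin


definition nrm :: "'a set \<Rightarrow> ('a \<Rightarrow> real) \<Rightarrow> ('a \<Rightarrow> real)" where
  "nrm S p = (\<lambda>a. if a \<in> S then p a / sum p S else 0)"

definition lnv :: "real^'d \<Rightarrow> real^'d" where "lnv x = (\<chi> j. ln (x $ j))"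
definition exv :: "real^'d \<Rightarrow> real^'d" where "exv u = (\<chi> j. exp (u $ j))"

lemma monomial_lnv: "monomial_pos x a = exp (a \<bullet> lnv x)"
  unfolding monomial_pos_def lnv_def inner_vec_def
  by (simp add: exp_sum)

lemma lnv_exv[simp]: "lnv (exv u) = u"
  unfolding lnv_def exv_def by (simp add: vec_eq_iff)

lemma exv_pos: "exv u \<in> pos_orthant"
  unfolding pos_orthant_def exv_def by simp

lemma exv_lnv: "x \<in> pos_orthant \<Longrightarrow> exv (lnv x) = x"
  unfolding pos_orthant_def exv_def lnv_def by (simp add: vec_eq_iff)

lemma toric_point_exv: "toric_point F w (exv u) = nrm F (\<lambda>a. w a * exp (a \<bullet> u))"
  unfolding toric_point_def nrm_def monomial_lnv lnv_exv by simp

lemma toric_point_image: "toric_point F w ` pos_orthant = range (\<lambda>u. nrm F (\<lambda>a. w a * exp (a \<bullet> u)))"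
proof -
  have "toric_point F w ` pos_orthant = toric_point F w ` range exv"
    using exv_pos exv_lnv by (metis (no_types, lifting) image_cong image_eqI subsetI subset_antisym rangeI image_subset_iff)
  also have "\<dots> = range (\<lambda>u. nrm F (\<lambda>a. w a * exp (a \<bullet> u)))"
    by (simp add: image_image toric_point_exv)
  finally show ?thesis .
qed

lemma nrm_simplex:
  assumes "finite A" "F \<subseteq> A" "F \<noteq> {}" "\<forall>a\<in>F. 0 < p a"
  shows "nrm F p \<in> simplex_face A F"
proof -
  have fF: "finite F" using assms finite_subset by blast
  have pos: "sum p F > 0" using assms fF by (simp add: sum_pos)
  have "(\<Sum>a\<in>A. nrm F p a) = (\<Sum>a\<in>F. nrm F p a)"
    by (rule sum.mono_neutral_right) (use assms in \<open>auto simp: nrm_def\<close>)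
  also have "\<dots> = (\<Sum>a\<in>F. p a / sum p F)" by (simp add: nrm_def)
  also have "\<dots> = 1" using pos by (simp add: sum_divide_distrib[symmetric])
  finally have s1: "(\<Sum>a\<in>A. nrm F p a) = 1" .
  have "\<forall>a. a \<notin> A \<longrightarrow> nrm F p a = 0" using assms by (auto simp: nrm_def)
  moreover have "\<forall>a\<in>A. 0 \<le> nrm F p a" using assms pos by (auto simp: nrm_def intro: less_imp_le)
  moreover have "\<forall>a\<in>A. a \<notin> F \<longrightarrow> nrm F p a = 0" by (auto simp: nrm_def)
  ultimately show ?thesis using s1 unfolding simplex_face_def by blast
qed

lemma nrm_cong: "(\<And>a. a \<in> S \<Longrightarrow> p a = q a) \<Longrightarrow> nrm S p = nrm S q"
  unfolding nrm_def by (auto intro!: ext sum.cong)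

lemma nrm_scale: "C \<noteq> 0 \<Longrightarrow> nrm S (\<lambda>a. C * p a) = nrm S p"
  unfolding nrm_def by (auto intro!: ext simp: sum_distrib_left[symmetric])

lemma torus_nrm:
  assumes "sum p A \<noteq> 0"
  shows "torus_act A u (nrm A p) = nrm A (\<lambda>a. u a * p a)"
proof -
  have "(\<Sum>b\<in>A. u b * nrm A p b) = (\<Sum>b\<in>A. u b * p b) / sum p A"
    by (simp add: nrm_def sum_divide_distrib)
  then show ?thesis using assms unfolding torus_act_def nrm_def
    by (auto intro!: ext)
qed

lemma l1_restrict:
  assumes "finite A" "F \<subseteq> A" "F \<noteq> {}" "\<forall>a\<in>A. 0 < p a"
  shows "l1dist A (nrm A p) (nrm F p) = 2 * sum p (A - F) / sum p A"
proof -
  have fF: "finite F" using assms finite_subset by blast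
  define SA where "SA = sum p A"
  define SF where "SF = sum p F"
  define SD where "SD = sum p (A - F)"
  have SFpos: "SF > 0" unfolding SF_def using assms fF by (intro sum_pos) auto
  have SDnn: "SD \<ge> 0" unfolding SD_def using assms by (intro sum_nonneg) (auto intro: less_imp_le)
  have SAeq: "SA = SF + SD" unfolding SA_def SF_def SD_def
    using sum.subset_diff[OF assms(2,1)] by (simp add: add.commute)
  have SApos: "SA > 0" using SAeq SFpos SDnn by simp
  have split: "l1dist A (nrm A p) (nrm F p) = (\<Sum>a\<in>A - F. \<bar>nrm A p a - nrm F p a\<bar>) + (\<Sum>a\<in>F. \<bar>nrm A p a - nrm F p a\<bar>)"
    unfolding l1dist_def using sum.subset_diff[OF assms(2,1)] by simp
  have "(\<Sum>a\<in>A - F. \<bar>nrm A p a - nrm F p a\<bar>) = (\<Sum>a\<in>A - F. p a / SA)"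
    using assms SApos by (intro sum.cong) (auto simp: nrm_def SA_def)
  also have "\<dots> = SD / SA" unfolding SD_def by (simp add: sum_divide_distrib)
  finally have e1: "(\<Sum>a\<in>A - F. \<bar>nrm A p a - nrm F p a\<bar>) = SD / SA" .
  have "(\<Sum>a\<in>F. \<bar>nrm A p a - nrm F p a\<bar>) = (\<Sum>a\<in>F. p a * (1 / SF - 1 / SA))"
  proof (intro sum.cong refl)
    fix a assume a: "a \<in> F"
    then have aA: "a \<in> A" using assms by blast
    have pa: "p a > 0" using assms aA by blast
    have "p a / SA \<le> p a / SF" using pa SFpos SAeq SDnn by (intro divide_left_mono) auto
    then show "\<bar>nrm A p a - nrm F p a\<bar> = p a * (1 / SF - 1 / SA)"
      using a aA by (simp add: nrm_def SA_def[symmetric] SF_def[symmetric] algebra_simps)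
  qed
  also have "\<dots> = SF * (1 / SF - 1 / SA)" unfolding SF_def by (simp add: sum_distrib_right)
  also have "\<dots> = 1 - SF / SA" using SFpos by (simp add: algebra_simps)
  finally have e2: "(\<Sum>a\<in>F. \<bar>nrm A p a - nrm F p a\<bar>) = 1 - SF / SA" .
  have "1 - SF / SA = (SA - SF) / SA" using SApos by (simp add: diff_divide_distrib)
  also have "\<dots> = SD / SA" using SAeq by simp
  finally have "SD / SA + (1 - SF / SA) = 2 * SD / SA" by simp
  then show ?thesis using split e1 e2 by (simp add: SA_def SD_def)
qed

lemma simplex_le1:
  assumes "finite A" "z \<in> simplex_face A F" "a \<in> A"
  shows "0 \<le> z a" "z a \<le> 1"
proof -
  have nn: "\<forall>a\<in>A. 0 \<le> z a" and s: "(\<Sum>a\<in>A. z a) = 1" using assms(2) unfolding simplex_face_def by auto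
  show "0 \<le> z a" using nn assms by blast
  have "z a \<le> (\<Sum>a\<in>A. z a)" using member_le_sum[of a A z] nn assms by blast
  then show "z a \<le> 1" using s by simp
qed

lemma torus_lipschitz:
  assumes "finite A" "m > 0" "\<forall>a\<in>A. m \<le> u a \<and> u a \<le> M"
    and z: "z \<in> simplex_face A A" and s: "s \<in> simplex_face A A"
  shows "l1dist A (torus_act A u z) (torus_act A u s) \<le> 2 * M / m * l1dist A z s"
proof -
  have zs: "(\<Sum>a\<in>A. z a) = 1" "\<forall>a\<in>A. 0 \<le> z a" using z unfolding simplex_face_def by auto
  have ss: "(\<Sum>a\<in>A. s a) = 1" "\<forall>a\<in>A. 0 \<le> s a" using s unfolding simplex_face_def by auto
  define Nz where "Nz = (\<Sum>a\<in>A. u a * z a)"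
  define Ns where "Ns = (\<Sum>a\<in>A. u a * s a)"
  have "m = (\<Sum>a\<in>A. m * z a)" using zs by (simp add: sum_distrib_left[symmetric])
  also have "\<dots> \<le> Nz" unfolding Nz_def using assms zs by (intro sum_mono mult_right_mono) auto
  finally have Nz: "Nz \<ge> m" .
  have "m = (\<Sum>a\<in>A. m * s a)" using ss by (simp add: sum_distrib_left[symmetric])
  also have "\<dots> \<le> Ns" unfolding Ns_def using assms ss by (intro sum_mono mult_right_mono) auto
  finally have Ns: "Ns \<ge> m" .
  have upos: "\<forall>a\<in>A. 0 \<le> u a" using assms by (meson less_le_trans less_imp_le)
  have "l1dist A (torus_act A u z) (torus_act A u s) = (\<Sum>a\<in>A. \<bar>u a * z a / Nz - u a * s a / Ns\<bar>)"
    unfolding l1dist_def torus_act_def Nz_def Ns_def by (intro sum.cong) auto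
  also have "\<dots> \<le> (\<Sum>a\<in>A. u a * \<bar>z a - s a\<bar> / Nz + u a * s a * \<bar>1 / Nz - 1 / Ns\<bar>)"
  proof (intro sum_mono)
    fix a assume a: "a \<in> A"
    have "u a * z a / Nz - u a * s a / Ns = u a * (z a - s a) / Nz + u a * s a * (1 / Nz - 1 / Ns)"
      by (simp add: right_diff_distrib diff_divide_distrib)
    also have "\<bar>\<dots>\<bar> \<le> \<bar>u a * (z a - s a) / Nz\<bar> + \<bar>u a * s a * (1 / Nz - 1 / Ns)\<bar>" by (rule abs_triangle_ineq)
    also have "\<dots> = u a * \<bar>z a - s a\<bar> / Nz + u a * s a * \<bar>1 / Nz - 1 / Ns\<bar>"
      using upos ss a Nz assms(2) by (simp add: abs_mult)
    finally show "\<bar>u a * z a / Nz - u a * s a / Ns\<bar> \<le> u a * \<bar>z a - s a\<bar> / Nz + u a * s a * \<bar>1 / Nz - 1 / Ns\<bar>" .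
  qed
  also have "\<dots> = (\<Sum>a\<in>A. u a * \<bar>z a - s a\<bar>) / Nz + Ns * \<bar>1 / Nz - 1 / Ns\<bar>"
    by (simp add: sum.distrib sum_divide_distrib sum_distrib_right Ns_def)
  finally have le0: "l1dist A (torus_act A u z) (torus_act A u s) \<le> (\<Sum>a\<in>A. u a * \<bar>z a - s a\<bar>) / Nz + Ns * \<bar>1 / Nz - 1 / Ns\<bar>" .
  have p: "Nz > 0" "Ns > 0" using Nz Ns assms(2) by auto
  have q1: "Ns * \<bar>1 / Nz - 1 / Ns\<bar> = \<bar>Ns - Nz\<bar> / Nz"
  proof -
    have "1 / Nz - 1 / Ns = (Ns - Nz) / (Nz * Ns)" using p by (simp add: field_simps)
    then have "\<bar>1 / Nz - 1 / Ns\<bar> = \<bar>Ns - Nz\<bar> / (Nz * Ns)" using p by (simp add: abs_divide abs_mult)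
    then show ?thesis using p by simp
  qed
  have "Nz - Ns = (\<Sum>a\<in>A. u a * (z a - s a))"
    unfolding Ns_def Nz_def by (simp add: sum_subtractf[symmetric] right_diff_distrib)
  then have "\<bar>Ns - Nz\<bar> = \<bar>\<Sum>a\<in>A. u a * (z a - s a)\<bar>" by (simp add: abs_minus_commute)
  also have "\<dots> \<le> (\<Sum>a\<in>A. \<bar>u a * (z a - s a)\<bar>)" by (rule sum_abs)
  also have "\<dots> = (\<Sum>a\<in>A. u a * \<bar>z a - s a\<bar>)" using upos by (intro sum.cong) (auto simp: abs_mult)
  finally have q2: "\<bar>Ns - Nz\<bar> \<le> (\<Sum>a\<in>A. u a * \<bar>z a - s a\<bar>)" .
  have "\<bar>Ns - Nz\<bar> / Nz \<le> (\<Sum>a\<in>A. u a * \<bar>z a - s a\<bar>) / Nz" using q2 p by (simp add: divide_right_mono)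
  then have le1: "l1dist A (torus_act A u z) (torus_act A u s) \<le> 2 * (\<Sum>a\<in>A. u a * \<bar>z a - s a\<bar>) / Nz"
    using le0 q1 by simp
  have "(\<Sum>a\<in>A. u a * \<bar>z a - s a\<bar>) \<le> (\<Sum>a\<in>A. M * \<bar>z a - s a\<bar>)"
    using assms by (intro sum_mono mult_right_mono) auto
  also have "\<dots> = M * l1dist A z s" unfolding l1dist_def by (simp add: sum_distrib_left)
  finally have le2: "(\<Sum>a\<in>A. u a * \<bar>z a - s a\<bar>) \<le> M * l1dist A z s" .
  have nnS: "0 \<le> (\<Sum>a\<in>A. u a * \<bar>z a - s a\<bar>)" using upos by (intro sum_nonneg) auto
  have "2 * (\<Sum>a\<in>A. u a * \<bar>z a - s a\<bar>) / Nz \<le> 2 * (\<Sum>a\<in>A. u a * \<bar>z a - s a\<bar>) / m"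
    using Nz assms(2) nnS by (intro divide_left_mono) auto
  also have "\<dots> \<le> 2 * (M * l1dist A z s) / m" using le2 assms(2) by (simp add: divide_right_mono)
  finally show ?thesis using le1 by simp
qed

lemma floor_eq_close: "\<lfloor>x::real\<rfloor> = \<lfloor>y\<rfloor> \<Longrightarrow> \<bar>x - y\<bar> < 1"
  by linarith

lemma totally_bounded_simplex:
  assumes fA: "finite A" and S: "S \<subseteq> simplex_face A F" and e: "e > 0"
  shows "\<exists>K. finite K \<and> K \<subseteq> S \<and> (\<forall>s\<in>S. \<exists>k\<in>K. l1dist A s k < e)"
proof -
  obtain N :: nat where N: "real (card A) / e < real N" using reals_Archimedean2 by blast
  have "0 \<le> real (card A) / e" using e by simp
  then have "real N > 0" using N by linarith
  then have Npos: "N > 0" by simp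
  define g where "g z = (\<lambda>a. if a \<in> A then nat \<lfloor>z a * real N\<rfloor> else 0)" for z :: "'a \<Rightarrow> real"
  have gS: "g ` S \<subseteq> {f. \<forall>x. (x \<in> A \<longrightarrow> f x \<in> {0..N}) \<and> (x \<notin> A \<longrightarrow> f x = 0)}"
  proof clarify
    fix z x assume z: "z \<in> S"
    show "(x \<in> A \<longrightarrow> g z x \<in> {0..N}) \<and> (x \<notin> A \<longrightarrow> g z x = 0)"
    proof (cases "x \<in> A")
      case True
      have "z x \<le> 1" using simplex_le1[OF fA _ True] S z by blast
      then have "z x * real N \<le> real N" using Npos by (simp add: mult_left_le_one_le)
      then have "\<lfloor>z x * real N\<rfloor> \<le> int N" by linarith
      then show ?thesis using True unfolding g_def by auto
    qed (auto simp: g_def)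
  qed
  have fin: "finite (g ` S)" by (rule finite_subset[OF gS finite_set_of_finite_funs[OF fA]]) simp
  define ch where "ch v = (SOME s. s \<in> S \<and> g s = v)" for v
  have ch: "ch (g s) \<in> S \<and> g (ch (g s)) = g s" if "s \<in> S" for s
    unfolding ch_def by (rule someI[of _ s]) (use that in auto)
  show ?thesis
  proof (intro exI conjI ballI)
    show "finite (ch ` g ` S)" using fin by simp
    show "ch ` g ` S \<subseteq> S" using ch by auto
    fix s assume s: "s \<in> S"
    define k where "k = ch (g s)"
    have kS: "k \<in> S" and gk: "g k = g s" using ch[OF s] by (auto simp: k_def)
    have close: "\<bar>s a - k a\<bar> \<le> 1 / real N" if a: "a \<in> A" for a
    proof -
      have "0 \<le> s a" "0 \<le> k a" using simplex_le1[OF fA _ a] S s kS by blast+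
      then have "0 \<le> s a * real N" "0 \<le> k a * real N" by auto
      moreover have "nat \<lfloor>s a * real N\<rfloor> = nat \<lfloor>k a * real N\<rfloor>"
        using fun_cong[OF gk, of a] a by (simp add: g_def)
      ultimately have "\<lfloor>s a * real N\<rfloor> = \<lfloor>k a * real N\<rfloor>"
        by (simp only: eq_nat_nat_iff zero_le_floor)
      then have "\<bar>s a * real N - k a * real N\<bar> < 1" by (rule floor_eq_close)
      then have "\<bar>s a - k a\<bar> * real N < 1" by (simp add: left_diff_distrib[symmetric] abs_mult)
      then show ?thesis using Npos by (simp add: field_simps)
    qed
    have "l1dist A s k \<le> real (card A) * (1 / real N)"
      unfolding l1dist_def using sum_bounded_above[of A "\<lambda>a. \<bar>s a - k a\<bar>" "1 / real N"] close by auto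
    also have "\<dots> < e" using N Npos e by (simp add: field_simps)
    finally show "\<exists>k\<in>ch ` g ` S. l1dist A s k < e" using k_def s by blast
  qed
qed

lemma dense_in_toric_var:
  assumes "finite A" "F \<subseteq> A" "F \<noteq> {}" "\<forall>a\<in>F. 0 < w a"
  shows "nrm F (\<lambda>a. w a * exp (a \<bullet> u)) \<in> toric_var A F w"
proof -
  define z where "z = nrm F (\<lambda>a. w a * exp (a \<bullet> u))"
  have 1: "z \<in> simplex_face A F"
    unfolding z_def using assms by (intro nrm_simplex) auto
  have 2: "z \<in> toric_point F w ` pos_orthant"
    unfolding toric_point_image z_def by blast
  have 3: "l1dist A z z = 0" by (simp add: l1dist_def)
  have "\<forall>e>0. \<exists>y\<in>toric_point F w ` pos_orthant. l1dist A z y < e"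
    using 2 3 by (intro allI impI bexI[of _ z]) auto
  then show ?thesis using 1 unfolding toric_var_def closure_in_face_def z_def by blast
qed

lemma toric_var_simplex: "toric_var A F w \<subseteq> simplex_face A F"
  unfolding toric_var_def closure_in_face_def by auto

definition Fc :: "(real^'d) set \<Rightarrow> (real^'d \<Rightarrow> real) \<Rightarrow> real^'d \<Rightarrow> (real^'d) set" where
  "Fc A lam c = {a\<in>A. \<forall>b\<in>A. lam b + c \<bullet> b \<le> lam a + c \<bullet> a}"

lemma inner_pair_split: "(c::(real^'d) \<times> real) \<bullet> (x, y) = fst c \<bullet> x + snd c * y"
  by (cases c) (simp add: inner_Pair)

lemma lift_le:
  assumes "\<forall>a\<in>A. c \<bullet> (a, lam a) \<le> M" "p \<in> lifted_polytope A lam"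
  shows "c \<bullet> p \<le> M"
proof -
  have "lifted_polytope A lam \<subseteq> {x. c \<bullet> x \<le> M}"
    unfolding lifted_polytope_def using assms(1)
    by (intro hull_minimal) (auto simp: convex_halfspace_le)
  then show ?thesis using assms(2) by blast
qed

lemma lift_in: "a \<in> A \<Longrightarrow> (a, lam a) \<in> lifted_polytope A lam"
  unfolding lifted_polytope_def by (rule hull_inc) auto

lemma Fc_nonempty:
  assumes "finite A" "A \<noteq> {}"
  shows "Fc A lam c \<noteq> {}"
proof -
  define f where "f a = lam a + c \<bullet> a" for a
  have "Max (f ` A) \<in> f ` A" using assms by (intro Max_in) auto
  then obtain a where a1: "a \<in> A" "f a = Max (f ` A)" by auto
  have "\<forall>b\<in>A. f b \<le> f a" using a1 assms by auto
  then have a: "a \<in> A" "\<forall>b\<in>A. lam b + c \<bullet> b \<le> lam a + c \<bullet> a" using a1 unfolding f_def by auto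
  then show ?thesis unfolding Fc_def by blast
qed

lemma Fc_subset: "Fc A lam c \<subseteq> A" unfolding Fc_def by auto

lemma Fc_in_reg_subdiv:
  assumes fA: "finite A" and ne: "A \<noteq> {}"
  shows "Fc A lam c \<in> reg_subdiv A lam"
proof -
  define P where "P = lifted_polytope A lam"
  define cc where "cc = (c, 1::real)"
  obtain a0 where a0: "a0 \<in> A" "\<forall>b\<in>A. lam b + c \<bullet> b \<le> lam a0 + c \<bullet> a0"
    using Fc_nonempty[OF fA ne, of lam c] unfolding Fc_def by blast
  define M where "M = lam a0 + c \<bullet> a0"
  have val: "cc \<bullet> (b, lam b) = lam b + c \<bullet> b" for b unfolding cc_def by (simp add: inner_Pair)
  have leM: "\<forall>p\<in>P. cc \<bullet> p \<le> M"
    unfolding P_def using lift_le[of A cc lam M] a0 val M_def by auto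
  define FF where "FF = P \<inter> {x. cc \<bullet> x = M}"
  have face: "FF face_of P" unfolding FF_def
    by (rule face_of_Int_supporting_hyperplane_le) (use leM in \<open>auto simp: P_def lifted_polytope_def\<close>)
  have a0P: "(a0, lam a0) \<in> P" unfolding P_def by (rule lift_in[OF a0(1)])
  have FFeq: "FF = {p \<in> P. \<forall>q\<in>P. cc \<bullet> q \<le> cc \<bullet> p}"
  proof (rule set_eqI, rule iffI)
    fix p assume "p \<in> FF" then show "p \<in> {p \<in> P. \<forall>q\<in>P. cc \<bullet> q \<le> cc \<bullet> p}"
      using leM unfolding FF_def by auto
  next
    fix p assume p: "p \<in> {p \<in> P. \<forall>q\<in>P. cc \<bullet> q \<le> cc \<bullet> p}"
    then have "M \<le> cc \<bullet> p" using a0P val M_def by force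
    then show "p \<in> FF" using p leM unfolding FF_def by force
  qed
  have up: "upper_face P FF" unfolding upper_face_def
    using face FFeq by (intro conjI exI[of _ cc]) (auto simp: cc_def)
  have "{a \<in> A. (a, lam a) \<in> FF} = Fc A lam c"
  proof (rule set_eqI, rule iffI)
    fix a assume a: "a \<in> {a \<in> A. (a, lam a) \<in> FF}"
    then have "lam a + c \<bullet> a = M" using val unfolding FF_def by auto
    then show "a \<in> Fc A lam c" using a a0 unfolding Fc_def M_def by auto
  next
    fix a assume a: "a \<in> Fc A lam c"
    then have aA: "a \<in> A" and m1: "\<forall>b\<in>A. lam b + c \<bullet> b \<le> lam a + c \<bullet> a" unfolding Fc_def by auto
    have "lam a0 + c \<bullet> a0 \<le> lam a + c \<bullet> a" using m1 a0(1) by blast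
    moreover have "lam a + c \<bullet> a \<le> lam a0 + c \<bullet> a0" using a0(2) aA by blast
    ultimately have "lam a + c \<bullet> a = M" unfolding M_def by linarith
    then show "a \<in> {a \<in> A. (a, lam a) \<in> FF}" using a val lift_in[of a A lam]
      unfolding FF_def P_def Fc_def by auto
  qed
  then show ?thesis using up unfolding reg_subdiv_def P_def by blast
qed

lemma reg_subdiv_Fc:
  assumes "\<Phi> \<in> reg_subdiv A lam"
  shows "\<exists>c. \<Phi> = Fc A lam c"
proof -
  define P where "P = lifted_polytope A lam"
  obtain FF cc where FF: "\<Phi> = {a \<in> A. (a, lam a) \<in> FF}" and h: "snd cc > 0"
    and FFeq: "FF = {p \<in> P. \<forall>q\<in>P. cc \<bullet> q \<le> cc \<bullet> p}"
    using assms unfolding reg_subdiv_def upper_face_def P_def by blast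
  define h where "h = snd cc"
  define c where "c = (1 / h) *\<^sub>R fst cc"
  have hpos: "h > 0" using h h_def by simp
  have val: "cc \<bullet> (b, lam b) = h * (lam b + c \<bullet> b)" for b
    using hpos unfolding inner_pair_split c_def h_def by (simp add: algebra_simps)
  have "\<Phi> = Fc A lam c"
  proof (rule set_eqI, rule iffI)
    fix a assume a: "a \<in> \<Phi>"
    then have aA: "a \<in> A" and "\<forall>q\<in>P. cc \<bullet> q \<le> cc \<bullet> (a, lam a)" using FF FFeq by auto
    then have "\<forall>b\<in>A. h * (lam b + c \<bullet> b) \<le> h * (lam a + c \<bullet> a)"
      using lift_in[of _ A lam] val unfolding P_def by metis
    then show "a \<in> Fc A lam c" using aA hpos unfolding Fc_def by auto
  next
    fix a assume a: "a \<in> Fc A lam c"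
    then have aA: "a \<in> A" unfolding Fc_def by auto
    have "\<forall>b\<in>A. cc \<bullet> (b, lam b) \<le> cc \<bullet> (a, lam a)"
      using a hpos val unfolding Fc_def by auto
    then have "\<forall>q\<in>P. cc \<bullet> q \<le> cc \<bullet> (a, lam a)" unfolding P_def
      using lift_le[of A cc lam "cc \<bullet> (a, lam a)"] by blast
    then show "a \<in> \<Phi>" using FF FFeq aA lift_in[OF aA, of lam] unfolding P_def by auto
  qed
  then show ?thesis by blast
qed

lemma dichotomy:
  fixes A :: "(real^'d) set"
  assumes fA: "finite A" and GA: "G \<subseteq> A" and Gne: "G \<noteq> {}"
  shows "(\<exists>c. G \<subseteq> Fc A lam c) \<or> (\<exists>\<eta>>0. \<forall>v. \<exists>a\<in>G. \<exists>b\<in>A. lam a + v \<bullet> a + \<eta> \<le> lam b + v \<bullet> b)"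
proof -
  have fG: "finite G" using fA GA finite_subset by blast
  define n where "n = real (card G)"
  have npos: "n > 0" unfolding n_def using fG Gne by (simp add: card_gt_0_iff)
  define q where "q = (1 / n) *\<^sub>R (\<Sum>a\<in>G. a)"
  define h where "h = (1 / n) * (\<Sum>a\<in>G. lam a)"
  define P where "P = lifted_polytope A lam"
  define p0 where "p0 = (q, h)"
  have sumq: "(\<Sum>a\<in>G. a) = n *\<^sub>R q" unfolding q_def using npos by simp
  have sumh: "(\<Sum>a\<in>G. lam a) = n * h" unfolding h_def using npos by simp
  have p0sum: "p0 = (\<Sum>a\<in>G. (1 / n) *\<^sub>R (a, lam a))"
    unfolding p0_def q_def h_def by (simp add: prod_eq_iff fst_sum snd_sum scaleR_sum_right sum_distrib_left)
  have p0P: "p0 \<in> P" unfolding p0sum P_def lifted_polytope_def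
  proof (rule convex_sum[OF fG convex_convex_hull])
    show "(\<Sum>i\<in>G. 1 / n) = 1" using npos by (simp add: n_def)
    show "\<And>i. i \<in> G \<Longrightarrow> 0 \<le> 1 / n" using npos by simp
    show "\<And>i. i \<in> G \<Longrightarrow> (i, lam i) \<in> convex hull (\<lambda>a. (a, lam a)) ` A"
      using GA by (intro hull_inc) auto
  qed
  show ?thesis
  proof (cases "\<exists>p\<in>P. fst p = q \<and> snd p > h")
    case True
    then obtain p where pP: "p \<in> P" and pq: "fst p = q" and ph: "snd p > h" by blast
    define \<eta> where "\<eta> = snd p - h"
    have "\<forall>v. \<exists>a\<in>G. \<exists>b\<in>A. lam a + v \<bullet> a + \<eta> \<le> lam b + v \<bullet> b"
    proof (rule allI, rule ccontr)
      fix v assume neg: "\<not> (\<exists>a\<in>G. \<exists>b\<in>A. lam a + v \<bullet> a + \<eta> \<le> lam b + v \<bullet> b)"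
      obtain b0 where b0: "b0 \<in> Fc A lam v" using Fc_nonempty[OF fA, of lam v] Gne GA by blast
      have b0A: "b0 \<in> A" and b0m: "\<forall>b\<in>A. lam b + v \<bullet> b \<le> lam b0 + v \<bullet> b0" using b0 unfolding Fc_def by auto
      have lt: "lam b0 + v \<bullet> b0 < lam a + v \<bullet> a + \<eta>" if "a \<in> G" for a
        using neg that b0A by force
      have "(\<Sum>a\<in>G. lam b0 + v \<bullet> b0) < (\<Sum>a\<in>G. lam a + v \<bullet> a + \<eta>)"
        using lt fG Gne by (intro sum_strict_mono) auto
      also have "(\<Sum>a\<in>G. lam a + v \<bullet> a + \<eta>) = (\<Sum>a\<in>G. lam a) + v \<bullet> (\<Sum>a\<in>G. a) + n * \<eta>"
        by (simp add: sum.distrib inner_sum_right n_def)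
      also have "\<dots> = n * (h + v \<bullet> q + \<eta>)" using sumq sumh by (simp add: algebra_simps)
      finally have A1: "n * (lam b0 + v \<bullet> b0) < n * (h + v \<bullet> q + \<eta>)" by (simp add: n_def)
      have "(v, 1::real) \<bullet> p \<le> lam b0 + v \<bullet> b0"
        using lift_le[of A "(v, 1::real)" lam "lam b0 + v \<bullet> b0" p] pP b0m unfolding P_def
        by (simp add: inner_Pair add.commute)
      moreover have "(v, 1::real) \<bullet> p = v \<bullet> q + h + \<eta>" using pq unfolding \<eta>_def
        by (simp add: inner_pair_split[of "(v,1)" "fst p" "snd p", simplified])
      ultimately have "h + v \<bullet> q + \<eta> \<le> lam b0 + v \<bullet> b0" by simp
      then have "n * (h + v \<bullet> q + \<eta>) \<le> n * (lam b0 + v \<bullet> b0)" using npos by simp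
      then show False using A1 by simp
    qed
    moreover have "\<eta> > 0" using ph unfolding \<eta>_def by simp
    ultimately show ?thesis by blast
  next
    case False
    then have top: "\<And>p. p \<in> P \<Longrightarrow> fst p = q \<Longrightarrow> snd p \<le> h" by force
    have "polytope P" unfolding P_def lifted_polytope_def polytope_def using fA by blast
    then have "polyhedron P" by (rule polytope_imp_polyhedron)
    then obtain \<F> where fF: "finite \<F>" and PF: "P = \<Inter>\<F>"
      and hs: "\<forall>H\<in>\<F>. \<exists>aa b. aa \<noteq> 0 \<and> H = {x. aa \<bullet> x \<le> b}"
      unfolding polyhedron_def by blast
    have "\<exists>aa b. {x. aa \<bullet> x \<le> b} \<in> \<F> \<and> aa \<bullet> p0 = b \<and> snd aa > 0"
    proof (rule ccontr)
      assume neg: "\<not> (\<exists>aa b. {x. aa \<bullet> x \<le> b} \<in> \<F> \<and> aa \<bullet> p0 = b \<and> snd aa > 0)"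
      have ev: "eventually (\<lambda>\<epsilon>. p0 + (0, \<epsilon>) \<in> H) (at_right 0)" if H: "H \<in> \<F>" for H
      proof -
        obtain aa b where Hd: "H = {x. aa \<bullet> x \<le> b}" using hs H by blast
        have "p0 \<in> H" using p0P PF H by blast
        then have le: "aa \<bullet> p0 \<le> b" using Hd by simp
        have val: "aa \<bullet> (p0 + (0, \<epsilon>)) = aa \<bullet> p0 + snd aa * \<epsilon>" for \<epsilon>
          by (simp add: inner_add_right inner_pair_split)
        show ?thesis
        proof (cases "aa \<bullet> p0 = b")
          case True
          have nn: "\<not> snd aa > 0"
          proof
            assume "snd aa > 0"
            then show False using neg H Hd True by blast
          qed
          have X: "p0 + (0, \<epsilon>) \<in> H" if "0 < \<epsilon>" for \<epsilon>
          proof -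
            have "snd aa * \<epsilon> \<le> 0" using nn that by (simp add: mult_nonpos_nonneg)
            then show ?thesis using Hd val True by simp
          qed
          show ?thesis by (rule eventually_mono[OF eventually_at_right_less[of "0::real"]]) (rule X)
        next
          case False
          then have lt: "0 < b - aa \<bullet> p0" using le by simp
          have "((\<lambda>\<epsilon>. snd aa * \<epsilon>) \<longlongrightarrow> 0) (at_right (0::real))"
            by (intro tendsto_mult_right_zero) (simp add: tendsto_ident_at)
          from order_tendstoD(2)[OF this lt] have ev1: "\<forall>\<^sub>F \<epsilon> in at_right 0. snd aa * \<epsilon> < b - aa \<bullet> p0" .
          have X: "p0 + (0, \<epsilon>) \<in> H" if "snd aa * \<epsilon> < b - aa \<bullet> p0" for \<epsilon>
            using that Hd val by simp
          show ?thesis by (rule eventually_mono[OF ev1]) (rule X)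
        qed
      qed
      have "eventually (\<lambda>\<epsilon>. 0 < \<epsilon> \<and> (\<forall>H\<in>\<F>. p0 + (0, \<epsilon>) \<in> H)) (at_right (0::real))"
        using eventually_at_right_less[of "0::real"] eventually_ball_finite[OF fF, of "\<lambda>\<epsilon> H. p0 + (0, \<epsilon>) \<in> H"] ev
        by (simp add: eventually_conj_iff)
      then obtain \<epsilon> :: real where e: "0 < \<epsilon>" "\<forall>H\<in>\<F>. p0 + (0, \<epsilon>) \<in> H"
        using eventually_happens'[OF trivial_limit_at_right_real] by blast
      then have "p0 + (0, \<epsilon>) \<in> P" using PF by blast
      moreover have "fst (p0 + (0, \<epsilon>)) = q" "snd (p0 + (0, \<epsilon>)) > h" using e unfolding p0_def by auto
      ultimately show False using top by fastforce
    qed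
    then obtain aa b where Hin: "{x. aa \<bullet> x \<le> b} \<in> \<F>" and act: "aa \<bullet> p0 = b" and chpos: "snd aa > 0"
      by blast
    have Psub: "\<forall>p\<in>P. aa \<bullet> p \<le> b" using Hin PF by blast
    define c' where "c' = fst aa"
    define ch where "ch = snd aa"
    define psi where "psi x = c' \<bullet> x + ch * lam x" for x
    have psi_le: "psi x \<le> b" if "x \<in> A" for x
    proof -
      have "aa \<bullet> (x, lam x) \<le> b" using Psub lift_in[OF that, of lam] unfolding P_def by blast
      then show ?thesis unfolding psi_def c'_def ch_def by (simp only: inner_pair_split)
    qed
    have bval: "b = c' \<bullet> q + ch * h" using act unfolding p0_def c'_def ch_def by (simp add: inner_pair_split)
    have "(\<Sum>x\<in>G. psi x) = c' \<bullet> (\<Sum>x\<in>G. x) + ch * (\<Sum>x\<in>G. lam x)"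
      unfolding psi_def by (simp add: sum.distrib inner_sum_right sum_distrib_left)
    also have "\<dots> = n * b" using sumq sumh bval by (simp add: algebra_simps)
    finally have sumpsi: "(\<Sum>x\<in>G. psi x) = n * b" .
    have "(\<Sum>x\<in>G. b - psi x) = 0" using sumpsi by (simp add: sum_subtractf n_def)
    then have eqG: "\<forall>x\<in>G. b - psi x = 0"
      using sum_nonneg_eq_0_iff[OF fG, of "\<lambda>x. b - psi x"] psi_le GA by auto
    define c where "c = (1 / ch) *\<^sub>R c'"
    have psic: "psi x = ch * (lam x + c \<bullet> x)" for x
      using chpos unfolding psi_def c_def ch_def by (simp add: algebra_simps)
    have "G \<subseteq> Fc A lam c"
    proof
      fix a assume a: "a \<in> G"
      have "\<forall>b'\<in>A. ch * (lam b' + c \<bullet> b') \<le> ch * (lam a + c \<bullet> a)"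
        using psi_le eqG a psic by (metis eq_iff_diff_eq_0)
      then show "a \<in> Fc A lam c" using a GA chpos unfolding Fc_def ch_def by auto
    qed
    then show ?thesis by blast
  qed
qed

lemma PL:
  fixes A :: "(real^'d) set"
  assumes fA: "finite A" and ne: "A \<noteq> {}"
  shows "\<exists>\<delta>>0. \<forall>v. \<exists>c. {a\<in>A. \<forall>b\<in>A. lam b + v \<bullet> b < lam a + v \<bullet> a + \<delta>} \<subseteq> Fc A lam c"
proof -
  define bad where "bad = {G. G \<subseteq> A \<and> G \<noteq> {} \<and> \<not> (\<exists>c. G \<subseteq> Fc A lam c)}"
  have fbad: "finite bad"
    by (rule finite_subset[of _ "Pow A"]) (use fA in \<open>auto simp: bad_def\<close>)
  have "\<forall>G\<in>bad. \<exists>\<eta>>0. \<forall>v. \<exists>a\<in>G. \<exists>b\<in>A. lam a + v \<bullet> a + \<eta> \<le> lam b + v \<bullet> b"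
    using dichotomy[OF fA] unfolding bad_def by blast
  then obtain eta where eta: "\<forall>G\<in>bad. eta G > 0 \<and> (\<forall>v. \<exists>a\<in>G. \<exists>b\<in>A. lam a + v \<bullet> a + eta G \<le> lam b + v \<bullet> b)"
    by metis
  define \<delta> where "\<delta> = Min (insert 1 (eta ` bad))"
  have dpos: "\<delta> > 0" unfolding \<delta>_def using fbad eta by (subst Min_gr_iff) auto
  have dle: "\<delta> \<le> eta G" if "G \<in> bad" for G unfolding \<delta>_def using fbad that by (intro Min_le) auto
  have "\<forall>v. \<exists>c. {a\<in>A. \<forall>b\<in>A. lam b + v \<bullet> b < lam a + v \<bullet> a + \<delta>} \<subseteq> Fc A lam c"
  proof
    fix v
    define G where "G = {a\<in>A. \<forall>b\<in>A. lam b + v \<bullet> b < lam a + v \<bullet> a + \<delta>}"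
    show "\<exists>c. G \<subseteq> Fc A lam c"
    proof (rule ccontr)
      assume nc: "\<not> (\<exists>c. G \<subseteq> Fc A lam c)"
      then have "G \<noteq> {}" by auto
      then have Gb: "G \<in> bad" using nc unfolding bad_def G_def by auto
      then obtain a b where a: "a \<in> G" "b \<in> A" "lam a + v \<bullet> a + eta G \<le> lam b + v \<bullet> b"
        using eta by blast
      have "lam b + v \<bullet> b < lam a + v \<bullet> a + \<delta>" using a unfolding G_def by blast
      then show False using a dle[OF Gb] by linarith
    qed
  qed
  then show ?thesis using dpos by blast
qed

lemma exp_neg_tendsto: "(k::real) < 0 \<Longrightarrow> ((\<lambda>t. exp (t * k)) \<longlongrightarrow> 0) at_top"
  using exp_at_top exp_powr_real tendsto_neg_powr by fastforce

lemma l1_nonneg: "0 \<le> l1dist A x y" unfolding l1dist_def by (simp add: sum_nonneg)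
lemma l1_sym: "l1dist A x y = l1dist A y x" unfolding l1dist_def by (simp add: abs_minus_commute)
lemma l1_tri: "l1dist A x z \<le> l1dist A x y + l1dist A y z"
proof -
  have "(\<Sum>a\<in>A. \<bar>x a - z a\<bar>) \<le> (\<Sum>a\<in>A. \<bar>x a - y a\<bar> + \<bar>y a - z a\<bar>)"
    by (intro sum_mono) (metis abs_triangle_ineq diff_add_cancel add_diff_eq)
  then show ?thesis unfolding l1dist_def by (simp add: sum.distrib)
qed

lemma haus_bound:
  assumes "X \<noteq> {}" "Y \<noteq> {}" "\<forall>x\<in>X. \<exists>y\<in>Y. l1dist A x y \<le> e" "\<forall>y\<in>Y. \<exists>x\<in>X. l1dist A x y \<le> e"
  shows "\<bar>hausdorff_l1 A X Y\<bar> \<le> e"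
proof -
  have bb: "bdd_below ((\<lambda>y. l1dist A x y) ` Y)" for x by (rule bdd_belowI2[of _ 0]) (rule l1_nonneg)
  have bb2: "bdd_below ((\<lambda>x. l1dist A x y) ` X)" for y by (rule bdd_belowI2[of _ 0]) (rule l1_nonneg)
  have i1: "(INF y\<in>Y. l1dist A x y) \<le> e" if xX: "x \<in> X" for x
  proof -
    obtain y where y: "y \<in> Y" "l1dist A x y \<le> e" using assms(3) xX by blast
    have "(INF y\<in>Y. l1dist A x y) \<le> l1dist A x y"
      using cINF_lower[OF bb y(1)] .
    then show ?thesis using y(2) by linarith
  qed
  have i2: "(INF x\<in>X. l1dist A x y) \<le> e" if yY: "y \<in> Y" for y
  proof -
    obtain x where x: "x \<in> X" "l1dist A x y \<le> e" using assms(4) yY by blast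
    have "(INF x\<in>X. l1dist A x y) \<le> l1dist A x y"
      using cINF_lower[OF bb2 x(1)] .
    then show ?thesis using x(2) by linarith
  qed
  have g1: "0 \<le> (INF y\<in>Y. l1dist A x y)" for x
    using cINF_greatest[OF assms(2), of 0 "\<lambda>y. l1dist A x y"] l1_nonneg by blast
  have s1: "(SUP x\<in>X. INF y\<in>Y. l1dist A x y) \<le> e"
    using cSUP_least[OF assms(1), of "\<lambda>x. INF y\<in>Y. l1dist A x y" e] i1 by blast
  have s2: "(SUP y\<in>Y. INF x\<in>X. l1dist A x y) \<le> e"
    using cSUP_least[OF assms(2), of "\<lambda>y. INF x\<in>X. l1dist A x y" e] i2 by blast
  obtain x0 where x0: "x0 \<in> X" using assms(1) by blast
  have ba: "bdd_above ((\<lambda>x. INF y\<in>Y. l1dist A x y) ` X)"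
    by (rule bdd_aboveI2[of X "\<lambda>x. INF y\<in>Y. l1dist A x y" e]) (rule i1)
  have "(INF y\<in>Y. l1dist A x0 y) \<le> (SUP x\<in>X. INF y\<in>Y. l1dist A x y)"
    using cSUP_upper[OF x0 ba] .
  then have "0 \<le> (SUP x\<in>X. INF y\<in>Y. l1dist A x y)" using g1[of x0] by linarith
  then have "0 \<le> hausdorff_l1 A X Y" "hausdorff_l1 A X Y \<le> e" using s1 s2 unfolding hausdorff_l1_def by auto
  then show ?thesis by simp
qed



lemma D1pt:
  fixes A :: "(real^'d) set" and u :: "real^'d"
  assumes fA: "finite A" and ne: "A \<noteq> {}" and wpos: "\<forall>a\<in>A. 0 < w a" and t: "t > 0"
    and dpos: "\<delta> > 0"
    and PLd: "\<forall>v. \<exists>c. {a\<in>A. \<forall>b\<in>A. lam b + v \<bullet> b < lam a + v \<bullet> a + \<delta>} \<subseteq> Fc A lam c"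
  shows "\<exists>z\<in>subdiv_var A (reg_subdiv A lam) w.
           l1dist A (nrm A (\<lambda>a. exp (t * lam a) * (w a * exp (a \<bullet> u)))) z
             \<le> 2 * (sum w A / Min (w ` A)) * exp (- (t * \<delta>))"
proof -
  define v where "v = (1 / t) *\<^sub>R u"
  obtain c where near: "{a\<in>A. \<forall>b\<in>A. lam b + v \<bullet> b < lam a + v \<bullet> a + \<delta>} \<subseteq> Fc A lam c"
    using PLd by blast
  define F where "F = Fc A lam c"
  define p where "p a = exp (t * lam a) * (w a * exp (a \<bullet> u))" for a
  have pform: "p a = w a * exp (t * (lam a + v \<bullet> a))" for a
  proof -
    have "a \<bullet> u = t * (v \<bullet> a)" unfolding v_def using t by (simp add: inner_commute)
    then show ?thesis unfolding p_def by (simp add: algebra_simps exp_add[symmetric])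
  qed
  have ppos: "\<forall>a\<in>A. 0 < p a" using wpos unfolding p_def by simp
  have FA: "F \<subseteq> A" unfolding F_def by (rule Fc_subset)
  have Fne: "F \<noteq> {}" unfolding F_def by (rule Fc_nonempty[OF fA ne])
  obtain a0 where a0: "a0 \<in> F" using Fne by blast
  define M where "M = lam a0 + c \<bullet> a0"
  have onF: "lam a + c \<bullet> a = M" if "a \<in> F" for a
  proof -
    have "lam a0 + c \<bullet> a0 \<le> lam a + c \<bullet> a" using that a0 FA unfolding F_def Fc_def by blast
    moreover have "lam a + c \<bullet> a \<le> lam a0 + c \<bullet> a0" using that a0 FA unfolding F_def Fc_def by blast
    ultimately show ?thesis unfolding M_def by linarith
  qed
  define z where "z = nrm F p"
  have "z = nrm F (\<lambda>a. exp (t * M) * (w a * exp (a \<bullet> (u - t *\<^sub>R c))))"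
    unfolding z_def
  proof (rule nrm_cong)
    fix a assume a: "a \<in> F"
    have "t * lam a + a \<bullet> u = t * M + a \<bullet> (u - t *\<^sub>R c)"
    proof -
      have h1: "lam a = M - c \<bullet> a" using onF[OF a] by linarith
      show ?thesis by (simp add: h1 inner_diff_right inner_commute algebra_simps)
    qed
    then show "p a = exp (t * M) * (w a * exp (a \<bullet> (u - t *\<^sub>R c)))"
      unfolding p_def by (simp add: exp_add[symmetric] algebra_simps)
  qed
  also have "\<dots> = nrm F (\<lambda>a. w a * exp (a \<bullet> (u - t *\<^sub>R c)))" by (rule nrm_scale) simp
  finally have zF: "z \<in> toric_var A F w"
    using dense_in_toric_var[OF fA FA Fne] wpos FA by auto
  have zS: "z \<in> subdiv_var A (reg_subdiv A lam) w"
    unfolding subdiv_var_def using zF Fc_in_reg_subdiv[OF fA ne, of lam c] unfolding F_def by blast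
  have l1: "l1dist A (nrm A p) z = 2 * sum p (A - F) / sum p A"
    unfolding z_def by (rule l1_restrict[OF fA FA Fne ppos])
  obtain b0 where b0: "b0 \<in> Fc A lam v" using Fc_nonempty[OF fA ne] by blast
  have b0A: "b0 \<in> A" and b0m: "\<forall>b\<in>A. lam b + v \<bullet> b \<le> lam b0 + v \<bullet> b0" using b0 unfolding Fc_def by auto
  define Mv where "Mv = lam b0 + v \<bullet> b0"
  define wm where "wm = Min (w ` A)"
  have wm_pos: "wm > 0" unfolding wm_def using fA ne wpos by (subst Min_gr_iff) auto
  have wm_le: "wm \<le> w a" if "a \<in> A" for a unfolding wm_def using fA that by (intro Min_le) auto
  have "wm * exp (t * Mv) \<le> p b0" unfolding pform Mv_def
    using wm_le[OF b0A] by (intro mult_right_mono) auto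
  also have "p b0 \<le> sum p A" using member_le_sum[of b0 A p] b0A ppos fA by (auto intro: less_imp_le)
  finally have lowA: "wm * exp (t * Mv) \<le> sum p A" .
  have "sum p (A - F) \<le> (\<Sum>a\<in>A - F. w a * exp (t * (Mv - \<delta>)))"
  proof (rule sum_mono)
    fix a assume a: "a \<in> A - F"
    then have "a \<notin> {a\<in>A. \<forall>b\<in>A. lam b + v \<bullet> b < lam a + v \<bullet> a + \<delta>}" using near unfolding F_def by blast
    then obtain b where b: "b \<in> A" "lam a + v \<bullet> a + \<delta> \<le> lam b + v \<bullet> b" using a by auto
    then have "lam a + v \<bullet> a \<le> Mv - \<delta>" using b0m unfolding Mv_def by force
    then have "exp (t * (lam a + v \<bullet> a)) \<le> exp (t * (Mv - \<delta>))" using t by simp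
    then show "p a \<le> w a * exp (t * (Mv - \<delta>))" unfolding pform using wpos a
      by (intro mult_left_mono) auto
  qed
  also have "\<dots> \<le> (\<Sum>a\<in>A. w a * exp (t * (Mv - \<delta>)))"
    using fA wpos by (intro sum_mono2) auto
  also have "\<dots> = sum w A * exp (t * Mv) * exp (- (t * \<delta>))"
    by (simp add: sum_distrib_right[symmetric] exp_add[symmetric] algebra_simps)
  finally have upD: "sum p (A - F) \<le> sum w A * exp (t * Mv) * exp (- (t * \<delta>))" .
  have Dnn: "0 \<le> sum p (A - F)" using ppos by (intro sum_nonneg) (auto intro: less_imp_le)
  have "2 * sum p (A - F) / sum p A \<le> 2 * (sum w A * exp (t * Mv) * exp (- (t * \<delta>))) / (wm * exp (t * Mv))"
    using upD lowA Dnn wm_pos by (intro frac_le) auto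
  also have "\<dots> = 2 * (sum w A / wm) * exp (- (t * \<delta>))" by simp
  finally show ?thesis using zS l1 unfolding wm_def p_def by (intro bexI[of _ z]) auto
qed

lemma D2pt:
  fixes A :: "(real^'d) set" and u :: "real^'d"
  assumes fA: "finite A" and ne: "A \<noteq> {}" and wpos: "\<forall>a\<in>A. 0 < w a"
    and FR: "F \<in> reg_subdiv A lam" and e: "e > 0"
  shows "eventually (\<lambda>t. \<exists>y \<in> torus_act A (one_param lam t) ` toric_var A A w.
            l1dist A y (nrm F (\<lambda>a. w a * exp (a \<bullet> u))) < e) at_top"
proof -
  obtain c where Fd: "F = Fc A lam c" using reg_subdiv_Fc[OF FR] by blast
  have FA: "F \<subseteq> A" unfolding Fd by (rule Fc_subset)
  have Fne: "F \<noteq> {}" unfolding Fd by (rule Fc_nonempty[OF fA ne])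
  have fF: "finite F" using fA FA finite_subset by blast
  obtain a0 where a0: "a0 \<in> F" using Fne by blast
  define M where "M = lam a0 + c \<bullet> a0"
  have a0m: "\<forall>b\<in>A. lam b + c \<bullet> b \<le> M" using a0 unfolding Fd Fc_def M_def by blast
  have onF: "lam a + c \<bullet> a = M" if "a \<in> F" for a
  proof -
    have "lam a0 + c \<bullet> a0 \<le> lam a + c \<bullet> a" using that a0 FA unfolding Fd Fc_def by blast
    then show ?thesis using a0m that FA unfolding M_def by force
  qed
  have offF: "lam a + c \<bullet> a < M" if "a \<in> A - F" for a
  proof -
    have "\<not> (\<forall>b\<in>A. lam b + c \<bullet> b \<le> lam a + c \<bullet> a)" using that unfolding Fd Fc_def by blast
    then obtain b where "b \<in> A" "lam a + c \<bullet> a < lam b + c \<bullet> b" by force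
    then show ?thesis using a0m by force
  qed
  define q where "q a = w a * exp (a \<bullet> u)" for a
  have qpos: "\<forall>a\<in>A. 0 < q a" using wpos unfolding q_def by simp
  define SF where "SF = sum q F"
  have SFpos: "SF > 0" unfolding SF_def using fF Fne qpos FA by (intro sum_pos) auto
  define g where "g t = 2 / SF * (\<Sum>a\<in>A - F. q a * exp (t * (lam a + c \<bullet> a - M)))" for t
  have "((\<lambda>t. \<Sum>a\<in>A - F. q a * exp (t * (lam a + c \<bullet> a - M))) \<longlongrightarrow> 0) at_top"
  proof (rule tendsto_null_sum)
    fix a assume "a \<in> A - F"
    then have "lam a + c \<bullet> a - M < 0" using offF by force
    then show "((\<lambda>t. q a * exp (t * (lam a + c \<bullet> a - M))) \<longlongrightarrow> 0) at_top"
      by (intro tendsto_mult_right_zero exp_neg_tendsto)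
  qed
  then have "(g \<longlongrightarrow> 0) at_top" unfolding g_def by (rule tendsto_mult_right_zero)
  from order_tendstoD(2)[OF this e] have evg: "eventually (\<lambda>t. g t < e) at_top" .
  have bound: "\<exists>y \<in> torus_act A (one_param lam t) ` toric_var A A w.
            l1dist A y (nrm F (\<lambda>a. w a * exp (a \<bullet> u))) \<le> g t" for t
  proof -
    define s where "s = nrm A (\<lambda>a. w a * exp (a \<bullet> (u + t *\<^sub>R c)))"
    have sX: "s \<in> toric_var A A w" unfolding s_def using dense_in_toric_var[OF fA subset_refl ne] wpos by blast
    define p where "p a = exp (t * (lam a + c \<bullet> a)) * q a" for a
    have ppos: "\<forall>a\<in>A. 0 < p a" using qpos unfolding p_def by simp
    have sumpos: "sum (\<lambda>a. w a * exp (a \<bullet> (u + t *\<^sub>R c))) A \<noteq> 0"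
      using fA ne wpos by (intro order.strict_implies_not_eq[symmetric] sum_pos) auto
    have "torus_act A (one_param lam t) s = nrm A (\<lambda>a. one_param lam t a * (w a * exp (a \<bullet> (u + t *\<^sub>R c))))"
      unfolding s_def by (rule torus_nrm[OF sumpos])
    also have "\<dots> = nrm A p"
    proof (rule nrm_cong)
      fix a
      have "t * lam a + a \<bullet> (u + t *\<^sub>R c) = t * (lam a + c \<bullet> a) + a \<bullet> u"
        by (simp add: inner_add_right inner_commute algebra_simps)
      then show "one_param lam t a * (w a * exp (a \<bullet> (u + t *\<^sub>R c))) = p a"
        unfolding one_param_def p_def q_def by (simp add: exp_add[symmetric] algebra_simps)
    qed
    finally have yeq: "torus_act A (one_param lam t) s = nrm A p" .
    have kF: "nrm F q = nrm F p"
    proof -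
      have "nrm F p = nrm F (\<lambda>a. exp (t * M) * q a)"
        by (rule nrm_cong) (simp add: p_def onF)
      also have "\<dots> = nrm F q" by (rule nrm_scale) simp
      finally show ?thesis by simp
    qed
    have "l1dist A (nrm A p) (nrm F p) = 2 * sum p (A - F) / sum p A"
      by (rule l1_restrict[OF fA FA Fne ppos])
    also have "\<dots> \<le> 2 * sum p (A - F) / sum p F"
    proof (rule divide_left_mono)
      show "sum p F \<le> sum p A" using fA FA ppos by (intro sum_mono2) (auto intro: less_imp_le)
      show "0 \<le> 2 * sum p (A - F)" using ppos by (intro mult_nonneg_nonneg sum_nonneg) (auto intro: less_imp_le)
      have "0 < sum p F" using fF Fne ppos FA by (intro sum_pos) auto
      moreover have "0 < sum p A" using fA ne ppos by (intro sum_pos) auto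
      ultimately show "0 < sum p A * sum p F" by simp
    qed
    also have "sum p F = exp (t * M) * SF" unfolding SF_def p_def
      by (simp add: sum_distrib_left onF)
    also have "sum p (A - F) = exp (t * M) * (\<Sum>a\<in>A - F. q a * exp (t * (lam a + c \<bullet> a - M)))"
    proof -
      have "p a = exp (t * M) * (q a * exp (t * (lam a + c \<bullet> a - M)))" for a
      proof -
        have "t * (lam a + c \<bullet> a) = t * M + t * (lam a + c \<bullet> a - M)" by (simp add: algebra_simps)
        then show ?thesis unfolding p_def by (simp only: exp_add) (simp add: algebra_simps)
      qed
      then show ?thesis by (simp add: sum_distrib_left)
    qed
    also have "2 * (exp (t * M) * (\<Sum>a\<in>A - F. q a * exp (t * (lam a + c \<bullet> a - M)))) / (exp (t * M) * SF) = g t"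
      unfolding g_def by simp
    finally have "l1dist A (nrm A p) (nrm F p) \<le> g t" .
    moreover have "torus_act A (one_param lam t) s \<in> torus_act A (one_param lam t) ` toric_var A A w"
      using sX by blast
    ultimately show ?thesis using yeq kF unfolding q_def by metis
  qed
  show ?thesis using evg
  proof eventually_elim
    case (elim t)
    obtain y where "y \<in> torus_act A (one_param lam t) ` toric_var A A w"
      "l1dist A y (nrm F (\<lambda>a. w a * exp (a \<bullet> u))) \<le> g t" using bound[of t] by blast
    then show ?case using elim by (intro bexI[of _ y]) auto
  qed
qed

lemma one_param_pos: "0 < one_param lam t a" unfolding one_param_def by simp

lemma D1:
  fixes A :: "(real^'d) set"
  assumes fA: "finite A" and ne: "A \<noteq> {}" and wpos: "\<forall>a\<in>A. 0 < w a" and e: "e > 0"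
  shows "eventually (\<lambda>t. \<forall>y\<in>torus_act A (one_param lam t) ` toric_var A A w.
            \<exists>z\<in>subdiv_var A (reg_subdiv A lam) w. l1dist A y z \<le> e) at_top"
proof -
  obtain \<delta> where dpos: "\<delta> > 0"
    and PLd: "\<forall>v. \<exists>c. {a\<in>A. \<forall>b\<in>A. lam b + v \<bullet> b < lam a + v \<bullet> a + \<delta>} \<subseteq> Fc A lam c"
    using PL[OF fA ne, of lam] by blast
  define C where "C = 2 * (sum w A / Min (w ` A))"
  have "((\<lambda>t. exp (t * (- \<delta>))) \<longlongrightarrow> 0) at_top" using dpos by (intro exp_neg_tendsto) simp
  then have "((\<lambda>t. C * exp (t * (- \<delta>))) \<longlongrightarrow> 0) at_top" by (rule tendsto_mult_right_zero)
  from order_tendstoD(2)[OF this, of "e / 2"] e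
  have ev1: "eventually (\<lambda>t. C * exp (t * (- \<delta>)) < e / 2) at_top" by simp
  show ?thesis using ev1 eventually_gt_at_top[of 0]
  proof eventually_elim
    case (elim t)
    then have t: "t > 0" and Bt: "C * exp (- (t * \<delta>)) < e / 2" by (auto simp: mult.commute)
    show ?case
    proof
      fix y assume "y \<in> torus_act A (one_param lam t) ` toric_var A A w"
      then obtain s where sX: "s \<in> toric_var A A w" and y: "y = torus_act A (one_param lam t) s" by blast
      define U where "U = one_param lam t"
      define mU where "mU = Min (U ` A)"
      define MU where "MU = Max (U ` A)"
      have mUpos: "mU > 0" unfolding mU_def U_def using fA ne by (subst Min_gr_iff) (auto simp: one_param_pos)
      have bnds: "\<forall>a\<in>A. mU \<le> U a \<and> U a \<le> MU" unfolding mU_def MU_def using fA by auto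
      define K where "K = 2 * MU / mU"
      have Kpos: "K \<ge> 0" unfolding K_def using mUpos bnds ne by (auto intro!: divide_nonneg_pos)
      define \<epsilon> where "\<epsilon> = e / 2 / (K + 1)"
      have epos: "\<epsilon> > 0" unfolding \<epsilon>_def using e Kpos by simp
      obtain s' where s'S: "s' \<in> toric_point A w ` pos_orthant" and ss': "l1dist A s s' < \<epsilon>"
        using sX epos unfolding toric_var_def closure_in_face_def by blast
      then obtain u where s': "s' = nrm A (\<lambda>a. w a * exp (a \<bullet> u))" unfolding toric_point_image by blast
      have s'simp: "s' \<in> simplex_face A A" unfolding s' using fA ne wpos by (intro nrm_simplex) auto
      have ssimp: "s \<in> simplex_face A A" using sX toric_var_simplex by blast
      have sumne: "sum (\<lambda>a. w a * exp (a \<bullet> u)) A \<noteq> 0"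
        using fA ne wpos by (intro order.strict_implies_not_eq[symmetric] sum_pos) auto
      have y': "torus_act A U s' = nrm A (\<lambda>a. exp (t * lam a) * (w a * exp (a \<bullet> u)))"
        unfolding s' torus_nrm[OF sumne] U_def one_param_def by simp
      obtain z where zZ: "z \<in> subdiv_var A (reg_subdiv A lam) w"
        and z: "l1dist A (torus_act A U s') z \<le> C * exp (- (t * \<delta>))"
        using D1pt[OF fA ne wpos t dpos PLd, of u] unfolding y' C_def by blast
      have "l1dist A y (torus_act A U s') \<le> K * l1dist A s s'"
        unfolding y K_def U_def[symmetric] by (rule torus_lipschitz[OF fA mUpos bnds ssimp s'simp])
      also have "\<dots> \<le> K * \<epsilon>" using ss' Kpos by (intro mult_left_mono) auto
      also have "\<dots> \<le> e / 2"
      proof -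
        have "K * \<epsilon> = e / 2 * (K / (K + 1))" unfolding \<epsilon>_def using Kpos by (simp add: field_simps)
        also have "\<dots> \<le> e / 2 * 1" using e Kpos by (intro mult_left_mono) auto
        finally show ?thesis by simp
      qed
      finally have "l1dist A y (torus_act A U s') \<le> e / 2" .
      then have "l1dist A y z \<le> e" using z Bt l1_tri[of A y z "torus_act A U s'"] by linarith
      then show "\<exists>z\<in>subdiv_var A (reg_subdiv A lam) w. l1dist A y z \<le> e" using zZ by blast
    qed
  qed
qed

lemma reg_subdiv_props:
  assumes "finite A" "A \<noteq> {}" "F \<in> reg_subdiv A lam"
  shows "F \<subseteq> A" "F \<noteq> {}"
proof -
  obtain c where "F = Fc A lam c" using reg_subdiv_Fc[OF assms(3)] by blast
  then show "F \<subseteq> A" "F \<noteq> {}" using Fc_subset Fc_nonempty[OF assms(1,2)] by auto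
qed

lemma D2:
  fixes A :: "(real^'d) set"
  assumes fA: "finite A" and ne: "A \<noteq> {}" and wpos: "\<forall>a\<in>A. 0 < w a" and e: "e > 0"
  shows "eventually (\<lambda>t. \<forall>z\<in>subdiv_var A (reg_subdiv A lam) w.
            \<exists>y\<in>torus_act A (one_param lam t) ` toric_var A A w. l1dist A y z \<le> e) at_top"
proof -
  define R where "R = reg_subdiv A lam"
  have fR: "finite R"
    by (rule finite_subset[of _ "Pow A"]) (use fA reg_subdiv_props[OF fA ne] in \<open>auto simp: R_def\<close>)
  define S where "S F = toric_point F w ` pos_orthant" for F
  have e3: "e / 3 > 0" using e by simp
  have "\<forall>F\<in>R. \<exists>K. finite K \<and> K \<subseteq> S F \<and> (\<forall>s\<in>S F. \<exists>k\<in>K. l1dist A s k < e / 3)"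
  proof
    fix F assume F: "F \<in> R"
    have FA: "F \<subseteq> A" and Fne: "F \<noteq> {}" using reg_subdiv_props[OF fA ne] F unfolding R_def by auto
    have "S F \<subseteq> simplex_face A F" unfolding S_def toric_point_image
      using fA FA Fne wpos by (auto intro!: nrm_simplex)
    then show "\<exists>K. finite K \<and> K \<subseteq> S F \<and> (\<forall>s\<in>S F. \<exists>k\<in>K. l1dist A s k < e / 3)"
      by (rule totally_bounded_simplex[OF fA _ e3])
  qed
  then obtain KK where KK: "\<forall>F\<in>R. finite (KK F) \<and> KK F \<subseteq> S F \<and> (\<forall>s\<in>S F. \<exists>k\<in>KK F. l1dist A s k < e / 3)"
    by metis
  have evk: "eventually (\<lambda>t. \<exists>y\<in>torus_act A (one_param lam t) ` toric_var A A w. l1dist A y k < e / 3) at_top"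
    if F: "F \<in> R" and k: "k \<in> KK F" for F k
  proof -
    have "k \<in> S F" using KK F k by blast
    then obtain u where ku: "k = nrm F (\<lambda>a. w a * exp (a \<bullet> u))" unfolding S_def toric_point_image by blast
    show ?thesis unfolding ku by (rule D2pt[OF fA ne wpos _ e3]) (use F R_def in simp)
  qed
  have "eventually (\<lambda>t. \<forall>F\<in>R. \<forall>k\<in>KK F. \<exists>y\<in>torus_act A (one_param lam t) ` toric_var A A w. l1dist A y k < e / 3) at_top"
    using fR KK evk by (intro eventually_ball_finite ballI) auto
  then show ?thesis
  proof eventually_elim
    case (elim t)
    show ?case
    proof
      fix z assume "z \<in> subdiv_var A (reg_subdiv A lam) w"
      then obtain F where F: "F \<in> R" and zF: "z \<in> toric_var A F w" unfolding subdiv_var_def R_def by blast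
      obtain s where sS: "s \<in> S F" and zs: "l1dist A z s < e / 3"
        using zF e3 unfolding toric_var_def closure_in_face_def S_def by blast
      obtain k where kK: "k \<in> KK F" and sk: "l1dist A s k < e / 3" using KK F sS by blast
      obtain y where yX: "y \<in> torus_act A (one_param lam t) ` toric_var A A w" and yk: "l1dist A y k < e / 3"
        using elim F kK by blast
      have "l1dist A y z \<le> l1dist A y k + l1dist A k z" by (rule l1_tri)
      also have "l1dist A k z \<le> l1dist A k s + l1dist A s z" by (rule l1_tri)
      finally have "l1dist A y z \<le> l1dist A y k + (l1dist A k s + l1dist A s z)" by simp
      moreover have "l1dist A k s = l1dist A s k" "l1dist A s z = l1dist A z s" by (rule l1_sym)+
      ultimately have "l1dist A y z < e" using yk sk zs by linarith
      then show "\<exists>y\<in>torus_act A (one_param lam t) ` toric_var A A w. l1dist A y z \<le> e"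
        using yX by (intro bexI[of _ y]) auto
    qed
  qed
qed

theorem mainTheorem7:
  fixes A :: "(real^'d) set" and lam :: "real^'d \<Rightarrow> real" and w :: "real^'d \<Rightarrow> real"
  assumes "finite A" and "A \<noteq> {}" and "\<forall>a\<in>A. 0 < w a"
  shows "((\<lambda>t. hausdorff_l1 A (torus_act A (one_param lam t) ` toric_var A A w)
                              (subdiv_var A (reg_subdiv A lam) w)) \<longlongrightarrow> 0) at_top"
proof (rule tendstoI)
  fix \<epsilon> :: real assume ep: "\<epsilon> > 0"
  have e2: "\<epsilon> / 2 > 0" using ep by simp
  have Xne: "torus_act A (one_param lam t) ` toric_var A A w \<noteq> {}" for t
    using dense_in_toric_var[OF assms(1) subset_refl assms(2), of w 0] assms(3) by auto
  have Zne: "subdiv_var A (reg_subdiv A lam) w \<noteq> {}"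
  proof -
    have F0: "Fc A lam 0 \<in> reg_subdiv A lam" by (rule Fc_in_reg_subdiv[OF assms(1,2)])
    have "nrm (Fc A lam 0) (\<lambda>a. w a * exp (a \<bullet> 0)) \<in> toric_var A (Fc A lam 0) w"
      using dense_in_toric_var[OF assms(1) Fc_subset Fc_nonempty[OF assms(1,2)]] assms(3) Fc_subset by blast
    then show ?thesis using F0 unfolding subdiv_var_def by blast
  qed
  show "eventually (\<lambda>t. dist (hausdorff_l1 A (torus_act A (one_param lam t) ` toric_var A A w)
                              (subdiv_var A (reg_subdiv A lam) w)) 0 < \<epsilon>) at_top"
    using D1[OF assms e2, of lam] D2[OF assms e2, of lam]
  proof eventually_elim
    case (elim t)
    have "\<bar>hausdorff_l1 A (torus_act A (one_param lam t) ` toric_var A A w) (subdiv_var A (reg_subdiv A lam) w)\<bar> \<le> \<epsilon> / 2"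
      by (rule haus_bound[OF Xne Zne]) (use elim in auto)
    then show ?case using ep by (simp add: dist_real_def)
  qed
qed


end
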